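(* Let $a:\mathbb{R}^d\to[0,\infty)$ satisfy $a(y)=a(-y)$, $\int_{\mathbb{R}^d}a=1$, $\widehat a\in L^1(\mathbb{R}^d)$, and $a(x)\le Ce^{-|x|^\alpha}$ for some $C<\infty$, $\alpha>1$. Let $a_n=a*a*\dots*a$ ($n$ factors). Then there exists a constant $c$ such that for all $n\ge1$ and all $y$ with $|y|/n\ge1$, \[|a_n(y)|\le e^{n\left(c-\frac12\left(\frac{|y|}{n}\right)^\alpha\right)}.\]
   Context: $\widehat a(k)=\int e^{-i(k,y)}a(y)\,dy$. *)

theory Defs
  imports "HOL-Analysis.Analysis"
begin

definition fourier :: "('a::euclidean_space \<Rightarrow> real) \<Rightarrow> 'a \<Rightarrow> complex" where
  "fourier a k = (LINT y|lborel. cis (- (k \<bullet> y)) * complex_of_real (a y))"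

definition conv :: "('a::euclidean_space \<Rightarrow> real) \<Rightarrow> ('a \<Rightarrow> real) \<Rightarrow> 'a \<Rightarrow> real" where
  "conv f g x = (LINT y|lborel. f (x - y) * g y)"

text \<open>n-fold convolution power a_n = a * ... * a (n factors), n \<ge> 1.\<close>
fun conv_pow :: "('a::euclidean_space \<Rightarrow> real) \<Rightarrow> nat \<Rightarrow> 'a \<Rightarrow> real" where
  "conv_pow a 0 = a"
| "conv_pow a (Suc 0) = a"
| "conv_pow a (Suc n) = conv a (conv_pow a n)"

end

theory Submission imports Defs "HOL-Probability.Distributions" begin

lemma one_dim_fin:
  fixes l :: real assumes l: "l > 0"
  shows "(\<integral>\<^sup>+ t. ennreal (exp (- \<bar>t\<bar> * l)) \<partial>lborel) < \<infinity>"
proof -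
  have ed1: "(\<integral>\<^sup>+ t. ennreal (exponential_density l t) \<partial>lborel) = 1"
  proof -
    interpret prob_space "density lborel (exponential_density l)"
      using prob_space_exponential_density[OF l] .
    have "emeasure (density lborel (exponential_density l)) UNIV = 1"
      using emeasure_space_1 by simp
    then show ?thesis by (simp add: emeasure_density)
  qed
  have ed2: "(\<integral>\<^sup>+ t. ennreal (exponential_density l (- t)) \<partial>lborel) = 1"
  proof -
    have "(\<integral>\<^sup>+ t. ennreal (exponential_density l t) \<partial>distr lborel borel uminus)
        = (\<integral>\<^sup>+ t. ennreal (exponential_density l (- t)) \<partial>lborel)"
      by (subst nn_integral_distr) (auto simp: exponential_density_def)
    then show ?thesis using ed1 by (simp add: lborel_distr_uminus)
  qed
  have pt: "ennreal (exp (- \<bar>t\<bar> * l)) \<le> ennreal (1/l) * (ennreal (exponential_density l t) + ennreal (exponential_density l (- t)))" for t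
  proof -
    have "exp (- \<bar>t\<bar> * l) \<le> (1/l) * (exponential_density l t + exponential_density l (- t))"
      using l by (auto simp: exponential_density_def field_simps abs_if)
    moreover have "0 \<le> exponential_density l t" "0 \<le> exponential_density l (-t)"
      using exponential_density_nonneg[OF l] by auto
    ultimately show ?thesis using l
      by (simp add: ennreal_mult'[symmetric] ennreal_plus[symmetric] del: ennreal_plus)
  qed
  have "(\<integral>\<^sup>+ t. ennreal (exp (- \<bar>t\<bar> * l)) \<partial>lborel) \<le>
     (\<integral>\<^sup>+ t. ennreal (1/l) * (ennreal (exponential_density l t) + ennreal (exponential_density l (- t))) \<partial>lborel)"
    by (intro nn_integral_mono pt)
  also have "\<dots> = ennreal (1/l) * 2"
  proof -
    have "(\<integral>\<^sup>+ t. (ennreal (exponential_density l t) + ennreal (exponential_density l (- t))) \<partial>lborel) = 2"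
      using ed1 ed2 by (subst nn_integral_add) (simp_all add: one_add_one)
    then show ?thesis by (subst nn_integral_cmult) auto
  qed
  also have "\<dots> < \<infinity>" by (simp add: ennreal_mult_less_top)
  finally show ?thesis .
qed

lemma exp_half_pow_le:
  fixes t \<alpha> :: real assumes t: "t \<ge> 0" and a: "\<alpha> > 1"
  shows "exp (- (1/2) * t powr \<alpha>) \<le> exp (2 powr (1/(\<alpha>-1))) * exp (- t)"
proof -
  define T where "T = 2 powr (1/(\<alpha>-1))"
  have T0: "T > 0" by (simp add: T_def)
  have "- (1/2) * t powr \<alpha> \<le> T - t"
  proof (cases "t \<ge> T")
    case True
    have "T powr (\<alpha>-1) = 2" unfolding T_def using a by (simp add: powr_powr)
    moreover have "T powr (\<alpha>-1) \<le> t powr (\<alpha>-1)" using True T0 a by (intro powr_mono2) auto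
    ultimately have "2 \<le> t powr (\<alpha>-1)" by simp
    moreover have "t powr \<alpha> = t * t powr (\<alpha>-1)" using True T0
      by (simp add: powr_add[symmetric] powr_mult_base)
    ultimately have "2 * t \<le> t powr \<alpha>" using t by (metis mult.commute mult_left_mono)
    then show ?thesis using T0 by linarith
  next
    case False
    have "0 \<le> t powr \<alpha>" by simp
    then show ?thesis using t False by linarith
  qed
  then have "exp (- (1/2) * t powr \<alpha>) \<le> exp (T - t)" by simp
  then show ?thesis by (simp add: T_def exp_diff exp_minus field_simps)
qed

lemma K_finite:
  fixes \<alpha> :: real assumes a: "\<alpha> > 1"
  shows "(\<integral>\<^sup>+ z. ennreal (exp (- (1/2) * norm (z::'a::euclidean_space) powr \<alpha>)) \<partial>lborel) < \<infinity>"
proof -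
  define d where "d = real DIM('a)"
  define E where "E = exp (2 powr (1/(\<alpha>-1)))"
  have d0: "d > 0" by (simp add: d_def)
  have pt: "exp (- (1/2) * norm z powr \<alpha>) \<le> E * (\<Prod>b\<in>Basis. exp (- \<bar>z \<bullet> b\<bar> * (1/d)))" for z :: 'a
  proof -
    have "(\<Sum>b\<in>Basis. \<bar>z \<bullet> b\<bar>) \<le> (\<Sum>b\<in>(Basis::'a set). norm z)"
      by (intro sum_mono Basis_le_norm)
    also have "\<dots> = d * norm z" by (simp add: d_def)
    finally have s: "(\<Sum>b\<in>Basis. \<bar>z \<bullet> b\<bar>) * (1/d) \<le> norm z" using d0 by (simp add: field_simps)
    have "(\<Prod>b\<in>Basis. exp (- \<bar>z \<bullet> b\<bar> * (1/d))) = exp (- ((\<Sum>b\<in>Basis. \<bar>z \<bullet> b\<bar>) * (1/d)))"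
      by (simp add: exp_sum[symmetric] sum_negf sum_divide_distrib)
    also have "\<dots> \<ge> exp (- norm z)" using s by simp
    finally have "exp (- norm z) \<le> (\<Prod>b\<in>Basis. exp (- \<bar>z \<bullet> b\<bar> * (1/d)))" .
    moreover have "exp (- (1/2) * norm z powr \<alpha>) \<le> E * exp (- norm z)"
      unfolding E_def using exp_half_pow_le[OF norm_ge_zero a] .
    ultimately show ?thesis by (smt (verit) E_def exp_gt_zero mult_left_mono)
  qed
  have "(\<integral>\<^sup>+ z. ennreal (exp (- (1/2) * norm (z::'a) powr \<alpha>)) \<partial>lborel)
      \<le> (\<integral>\<^sup>+ z. ennreal E * (\<Prod>b\<in>Basis. ennreal (exp (- \<bar>(z::'a) \<bullet> b\<bar> * (1/d)))) \<partial>lborel)"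
  proof (rule nn_integral_mono)
    fix z :: 'a
    assume "z \<in> space lborel"
    have "ennreal E * (\<Prod>b\<in>Basis. ennreal (exp (- \<bar>z \<bullet> b\<bar> * (1/d))))
        = ennreal (E * (\<Prod>b\<in>Basis. exp (- \<bar>z \<bullet> b\<bar> * (1/d))))"
      by (simp add: prod_ennreal ennreal_mult' E_def)
    then show "ennreal (exp (- (1/2) * norm z powr \<alpha>)) \<le> ennreal E * (\<Prod>b\<in>Basis. ennreal (exp (- \<bar>z \<bullet> b\<bar> * (1/d))))"
      using pt[of z] by (simp add: ennreal_leI)
  qed
  also have "\<dots> = ennreal E * (\<Prod>b\<in>(Basis::'a set). (\<integral>\<^sup>+ t. ennreal (exp (- \<bar>t\<bar> * (1/d))) \<partial>lborel))"
  proof -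
    have "(\<integral>\<^sup>+ z. (\<Prod>b\<in>Basis. ennreal (exp (- \<bar>(z::'a) \<bullet> b\<bar> * (1/d)))) \<partial>lborel)
        = (\<Prod>b\<in>(Basis::'a set). (\<integral>\<^sup>+ t. ennreal (exp (- \<bar>t\<bar> * (1/d))) \<partial>lborel))"
      by (rule nn_integral_lborel_prod[where f="\<lambda>b t. ennreal (exp (- \<bar>t\<bar> * (1/d)))"]) auto
    then show ?thesis by (subst nn_integral_cmult) auto
  qed
  also have "\<dots> < \<infinity>"
    using one_dim_fin[of "1/d"] d0
    by (simp add: E_def less_top[symmetric] ennreal_mult_eq_top_iff power_eq_top_ennreal)
  finally show ?thesis .
qed

lemma conv_scalar:
  fixes A B n \<alpha> :: real
  assumes A: "A \<ge> 0" and B: "B \<ge> 0" and n: "n \<ge> 1" and a: "\<alpha> > 1"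
  shows "(n+1) powr (1-\<alpha>) * (A+B) powr \<alpha> \<le> A powr \<alpha> + n powr (1-\<alpha>) * B powr \<alpha>"
proof -
  define p where "p = (n+1) powr \<alpha>"
  define q where "q = (n+1) powr (1-\<alpha>)"
  have qp: "q * p = n + 1" unfolding p_def q_def using n by (simp add: powr_add[symmetric])
  have nn: "n / n powr \<alpha> = n powr (1-\<alpha>)" using n by (simp add: powr_diff)
  have q1: "q \<le> 1" unfolding q_def using n a powr_mono[of "1-\<alpha>" 0 "n+1"] by auto
  have qn: "q \<le> n powr (1-\<alpha>)" unfolding q_def using n a
    by (intro powr_mono2') auto
  have q0: "q \<ge> 0" by (simp add: q_def)
  show ?thesis
  proof (cases "A = 0 \<or> B = 0")
    case True
    then show ?thesis
    proof
      assume "A = 0"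
      then show ?thesis using qn B by (simp add: q_def[symmetric] mult_right_mono)
    next
      assume "B = 0"
      moreover have "q * A powr \<alpha> \<le> A powr \<alpha>"
        using q1 q0 by (simp add: mult_left_le_one_le)
      ultimately show ?thesis by (simp add: q_def[symmetric])
    qed
  next
    case False
    then have A0: "A > 0" and B0: "B > 0" using A B by auto
    define t where "t = n / (n+1)"
    have t01: "t \<ge> 0" "t \<le> 1" using n by (auto simp: t_def)
    have c: "((1 - t) *\<^sub>R ((n+1)*A) + t *\<^sub>R ((n+1)*B/n)) powr \<alpha>
        \<le> (1 - t) * ((n+1)*A) powr \<alpha> + t * ((n+1)*B/n) powr \<alpha>"
      using convex_onD[OF powr_convex[of \<alpha>] t01, of "(n+1)*A" "(n+1)*B/n"] a A0 B0 n by auto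
    have l: "(1 - t) *\<^sub>R ((n+1)*A) + t *\<^sub>R ((n+1)*B/n) = A + B"
    proof -
      have "1 - t = 1/(n+1)" using n by (simp add: t_def field_simps)
      then have e1: "(1-t)*((n+1)*A) = A" using n by simp
      have e2: "t*((n+1)*B/n) = B" using n by (simp add: t_def)
      show ?thesis using e1 e2 by simp
    qed
    have r1: "((n+1)*A) powr \<alpha> = p * A powr \<alpha>" unfolding p_def using n A
      by (simp add: powr_mult)
    have r2: "((n+1)*B/n) powr \<alpha> = p * B powr \<alpha> / n powr \<alpha>" unfolding p_def using n B
      by (simp add: powr_mult powr_divide)
    have "(A+B) powr \<alpha> \<le> (1/(n+1)) * (p * A powr \<alpha>) + (n/(n+1)) * (p * B powr \<alpha> / n powr \<alpha>)"
      using c unfolding l r1 r2 using n by (simp add: t_def field_simps)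
    then have "q * (A+B) powr \<alpha> \<le> q * ((1/(n+1)) * (p * A powr \<alpha>) + (n/(n+1)) * (p * B powr \<alpha> / n powr \<alpha>))"
      using q0 by (rule mult_left_mono)
    also have "\<dots> = (q*p)/(n+1) * A powr \<alpha> + (q*p)/(n+1) * (n / n powr \<alpha>) * B powr \<alpha>"
      by (simp add: field_simps)
    also have "\<dots> = A powr \<alpha> + n powr (1-\<alpha>) * B powr \<alpha>"
      unfolding qp nn using n by simp
    finally show ?thesis by (simp add: q_def)
  qed
qed

lemma translate_nn:
  fixes f :: "'a::euclidean_space \<Rightarrow> real"
  assumes [measurable]: "f \<in> borel_measurable borel"
  shows "(\<integral>\<^sup>+ x. ennreal (f (x - y)) \<partial>lborel) = (\<integral>\<^sup>+ x. ennreal (f x) \<partial>lborel)"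
proof -
  have "(\<integral>\<^sup>+ x. ennreal (f x) \<partial>distr lborel borel ((+) (-y))) = (\<integral>\<^sup>+ x. ennreal (f (-y + x)) \<partial>lborel)"
    by (subst nn_integral_distr) auto
  then show ?thesis by (simp add: lborel_distr_plus)
qed

lemma main_bound:
  fixes a :: "'a::euclidean_space \<Rightarrow> real" and C \<alpha> :: real
  assumes nonneg: "\<And>x. a x \<ge> 0"
    and alpha: "\<alpha> > 1"
    and decay: "\<And>x. a x \<le> C * exp (- (norm x powr \<alpha>))"
  obtains M where "M \<ge> 1" "\<And>n y. n \<ge> 1 \<Longrightarrow> 0 \<le> conv_pow a n y \<and>
      conv_pow a n y \<le> M ^ n * exp (- (1/2) * real n powr (1-\<alpha>) * norm y powr \<alpha>)"
proof -
  define g where "g = (\<lambda>z::'a. exp (- (1/2) * norm z powr \<alpha>))"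
  have gm[measurable]: "g \<in> borel_measurable borel"
    unfolding g_def by measurable
  define K where "K = enn2real (\<integral>\<^sup>+ z. ennreal (g z) \<partial>lborel)"
  have K0: "K \<ge> 0" by (simp add: K_def)
  have Keq: "(\<integral>\<^sup>+ z. ennreal (g z) \<partial>lborel) = ennreal K"
    using K_finite[OF alpha, where 'a='a] unfolding K_def g_def
    by (simp add: less_top ennreal_enn2real)
  have C0: "C \<ge> 0"
  proof -
    have "0 \<le> C * exp (- (norm (0::'a) powr \<alpha>))" using nonneg[of 0] decay[of 0] by linarith
    then show ?thesis by (simp add: zero_le_mult_iff)
  qed
  define M where "M = max 1 (max C (C*K))"
  have M1: "M \<ge> 1" and MC: "C \<le> M" and MCK: "C * K \<le> M" by (auto simp: M_def)
  have ind: "0 \<le> conv_pow a (Suc m) y \<and>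
      conv_pow a (Suc m) y \<le> M ^ Suc m * exp (- (1/2) * real (Suc m) powr (1-\<alpha>) * norm y powr \<alpha>)" for m y
  proof (induction m arbitrary: y)
    case 0
    have "a y \<le> C * exp (- (norm y powr \<alpha>))" by (rule decay)
    also have "\<dots> \<le> M * exp (- (1/2) * norm y powr \<alpha>)"
      using MC C0 by (intro mult_mono) auto
    finally show ?case using nonneg[of y] by simp
  next
    case (Suc m)
    define N where "N = real (Suc m)"
    have N1: "N \<ge> 1" by (simp add: N_def)
    define f where "f = conv_pow a (Suc m)"
    have f0: "\<And>x. 0 \<le> f x" and fb: "\<And>x. f x \<le> M ^ Suc m * exp (- (1/2) * N powr (1-\<alpha>) * norm x powr \<alpha>)"
      using Suc.IH unfolding f_def N_def by auto
    define E where "E = exp (- (1/2) * (N+1) powr (1-\<alpha>) * norm y powr \<alpha>)"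
    have E0: "E \<ge> 0" by (simp add: E_def)
    have cp: "conv_pow a (Suc (Suc m)) y = (LINT x|lborel. a (y - x) * f x)"
      by (simp add: f_def conv_def)
    have pt: "a (y - x) * f x \<le> (C * M ^ Suc m * E) * g (x - y)" for x
    proof -
      have sc: "(N+1) powr (1-\<alpha>) * (norm (y-x) + norm x) powr \<alpha> \<le> norm (y-x) powr \<alpha> + N powr (1-\<alpha>) * norm x powr \<alpha>"
        by (rule conv_scalar[OF norm_ge_zero norm_ge_zero N1 alpha])
      have "norm y powr \<alpha> \<le> (norm (y-x) + norm x) powr \<alpha>"
        using alpha norm_triangle_ineq[of "y-x" x] by (intro powr_mono2) auto
      then have "(N+1) powr (1-\<alpha>) * norm y powr \<alpha> \<le> (N+1) powr (1-\<alpha>) * (norm (y-x) + norm x) powr \<alpha>"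
        by (intro mult_left_mono) auto
      with sc have key: "- (norm (y-x) powr \<alpha>) - (1/2) * N powr (1-\<alpha>) * norm x powr \<alpha>
          \<le> - (1/2) * (N+1) powr (1-\<alpha>) * norm y powr \<alpha> + (- (1/2) * norm (x-y) powr \<alpha>)"
        by (simp add: norm_minus_commute)
      have "a (y - x) * f x \<le> (C * exp (- (norm (y-x) powr \<alpha>))) * (M ^ Suc m * exp (- (1/2) * N powr (1-\<alpha>) * norm x powr \<alpha>))"
        using decay[of "y-x"] fb[of x] f0[of x] nonneg[of "y-x"] C0 by (intro mult_mono) auto
      also have "\<dots> = C * M ^ Suc m * exp (- (norm (y-x) powr \<alpha>) - (1/2) * N powr (1-\<alpha>) * norm x powr \<alpha>)"
      proof -
        have "exp (- (norm (y-x) powr \<alpha>) - (1/2) * N powr (1-\<alpha>) * norm x powr \<alpha>)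
           = exp (- (norm (y-x) powr \<alpha>)) * exp (- (1/2) * N powr (1-\<alpha>) * norm x powr \<alpha>)"
          by (simp add: exp_add[symmetric])
        then show ?thesis by simp
      qed
      also have "\<dots> \<le> C * M ^ Suc m * exp (- (1/2) * (N+1) powr (1-\<alpha>) * norm y powr \<alpha> + (- (1/2) * norm (x-y) powr \<alpha>))"
        using key C0 M1 by (intro mult_left_mono) auto
      also have "\<dots> = (C * M ^ Suc m * E) * g (x - y)"
        unfolding E_def g_def by (simp only: exp_add mult.assoc)
      finally show ?thesis .
    qed
    have bnd: "(LINT x|lborel. a (y - x) * f x) \<le> C * K * M ^ Suc m * E"
    proof (cases "integrable lborel (\<lambda>x. a (y - x) * f x)")
      case True
      have "ennreal (LINT x|lborel. a (y - x) * f x) = (\<integral>\<^sup>+ x. ennreal (a (y - x) * f x) \<partial>lborel)"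
        using True nonneg f0 by (intro nn_integral_eq_integral[symmetric]) auto
      also have "\<dots> \<le> (\<integral>\<^sup>+ x. ennreal (C * M ^ Suc m * E) * ennreal (g (x - y)) \<partial>lborel)"
        using pt C0 M1 E0 by (intro nn_integral_mono) (simp add: ennreal_mult'[symmetric] ennreal_leI)
      also have "\<dots> = ennreal (C * M ^ Suc m * E) * (\<integral>\<^sup>+ x. ennreal (g (x - y)) \<partial>lborel)"
        by (rule nn_integral_cmult) measurable
      also have "\<dots> = ennreal (C * M ^ Suc m * E) * ennreal K"
        by (simp add: translate_nn[OF gm] Keq)
      also have "\<dots> = ennreal (C * K * M ^ Suc m * E)"
        using C0 M1 E0 K0 by (simp add: ennreal_mult'[symmetric] mult_ac)
      finally show ?thesis using C0 M1 E0 K0 by (simp add: ennreal_le_iff)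
    next
      case False
      then show ?thesis using C0 M1 E0 K0 by (simp add: not_integrable_integral_eq)
    qed
    also have "\<dots> \<le> M * M ^ Suc m * E"
      using MCK M1 E0 by (intro mult_right_mono) auto
    finally have ub: "conv_pow a (Suc (Suc m)) y \<le> M ^ Suc (Suc m) * E"
      using cp by simp
    have lb: "0 \<le> conv_pow a (Suc (Suc m)) y"
      unfolding cp using nonneg f0 by (intro integral_nonneg_AE) auto
    show ?case using ub lb by (simp add: E_def N_def add.commute)
  qed
  show ?thesis
  proof (rule that[OF M1])
    fix n :: nat and y :: 'a assume "n \<ge> 1"
    then obtain m where "n = Suc m" by (cases n) auto
    then show "0 \<le> conv_pow a n y \<and>
      conv_pow a n y \<le> M ^ n * exp (- (1/2) * real n powr (1-\<alpha>) * norm y powr \<alpha>)"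
      using ind[of m y] by simp
  qed
qed


theorem mainTheorem8:
  fixes a :: "'a::euclidean_space \<Rightarrow> real" and C \<alpha> :: real
  assumes meas: "a \<in> borel_measurable lborel"
    and nonneg: "\<And>x. a x \<ge> 0"
    and symm: "\<And>y. a y = a (- y)"
    and int_a: "integrable lborel a"
    and int_one: "(LINT y|lborel. a y) = 1"
    and four_L1: "integrable lborel (fourier a)"
    and alpha: "\<alpha> > 1"
    and decay: "\<And>x. a x \<le> C * exp (- (norm x powr \<alpha>))"
  shows "\<exists>c::real. \<forall>n::nat. \<forall>y::'a. n \<ge> 1 \<longrightarrow> norm y / real n \<ge> 1 \<longrightarrow>
           \<bar>conv_pow a n y\<bar> \<le> exp (real n * (c - 1/2 * (norm y / real n) powr \<alpha>))"
proof -
  obtain M where M1: "M \<ge> 1" and B: "\<And>n y. n \<ge> 1 \<Longrightarrow> 0 \<le> conv_pow a n y \<and>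
      conv_pow a n y \<le> M ^ n * exp (- (1/2) * real n powr (1-\<alpha>) * norm y powr \<alpha>)"
    using main_bound[OF nonneg alpha decay] by blast
  show ?thesis
  proof (intro exI[of _ "ln M"] allI impI)
    fix n :: nat and y :: 'a
    assume n: "n \<ge> 1" and "norm y / real n \<ge> 1"
    have rn: "real n > 0" using n by simp
    have e1: "M ^ n = exp (real n * ln M)" using M1
      by (simp add: exp_of_nat_mult)
    have e2: "real n powr (1-\<alpha>) * norm y powr \<alpha> = real n * (norm y / real n) powr \<alpha>"
      using rn by (simp add: powr_divide powr_diff)
    have "\<bar>conv_pow a n y\<bar> = conv_pow a n y" using B[OF n] by simp
    also have "\<dots> \<le> M ^ n * exp (- (1/2) * real n powr (1-\<alpha>) * norm y powr \<alpha>)" using B[OF n] by simp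
    also have "\<dots> = exp (real n * ln M) * exp (- (1/2) * (real n * (norm y / real n) powr \<alpha>))"
      unfolding e1 by (simp add: e2 mult.assoc)
    also have "\<dots> = exp (real n * (ln M - 1/2 * (norm y / real n) powr \<alpha>))"
      by (simp add: exp_add[symmetric] algebra_simps)
    finally show "\<bar>conv_pow a n y\<bar> \<le> exp (real n * (ln M - 1/2 * (norm y / real n) powr \<alpha>))" .
  qed
qed

end
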